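(* Let $\nu,\beta>0$, $\rho>1$, $n\ge1$, and let $X,X_1,\ldots,X_n$ be i.i.d. $\mathrm{Pareto}(\nu,\beta)$. Let $J_n\coloneqq\log_\rho X_{(n)}$ where $X_{(n)}=\max_iX_i$, and define \[p_{\mathrm{last}}\coloneqq\Pr\left(\rho^{\lceil J_n\rceil-1}<X\le\rho^{\lceil J_n\rceil}\right),\qquad p_{\mathrm{tail}}\coloneqq\Pr\left(X>\rho^{\lceil J_n\rceil}\right)\] (probabilities taken jointly over $X$ and $X_1,\ldots,X_n$). Then \[p_{\mathrm{last}}\le\frac{\rho^\beta-\rho^{-\beta}}{n+1}\qquad\text{and}\qquad\frac{\rho^{-\beta}}{n+1}\le p_{\mathrm{tail}}\le\frac{1}{n+1}.\]
   Context: $\mathrm{Pareto}(\nu,\beta)$ has CDF $1-(\nu/x)^\beta$ for $x>\nu$. *)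

theory Defs
  imports "HOL-Probability.Probability"
begin

definition pareto_cdf :: "real \<Rightarrow> real \<Rightarrow> real \<Rightarrow> real" where
  "pareto_cdf \<nu> \<beta> x = (if \<nu> < x then 1 - (\<nu> / x) powr \<beta> else 0)"

end

theory Submission
  imports Defs
begin
lemma pareto_cdf_meas[measurable]: "pareto_cdf nu b \<in> borel_measurable borel"
  unfolding pareto_cdf_def[abs_def] by measurable

lemma h_alt:
  assumes "nu > 0" "y > 0" "b > 0"
  shows "1 - pareto_cdf nu b y = min 1 ((nu / y) powr b)"
proof (cases "nu < y")
  case True
  then have "nu / y < 1" "nu/y \<ge> 0" using assms by auto
  then have "(nu/y) powr b < 1" using assms using powr_less_mono2[of b "nu/y" 1] by simp
  then show ?thesis using True by (simp add: pareto_cdf_def)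
next
  case False
  then have "nu / y \<ge> 1" using assms by simp
  then have "(nu/y) powr b \<ge> 1" using assms ge_one_powr_ge_zero[of "nu/y" b] by simp
  then show ?thesis using False by (simp add: pareto_cdf_def)
qed

lemma pareto_cdf_bounds: "b > 0 \<Longrightarrow> nu > 0 \<Longrightarrow> 0 \<le> pareto_cdf nu b y \<and> pareto_cdf nu b y \<le> 1"
proof -
  assume a: "b > 0" "nu > 0"
  show ?thesis
  proof (cases "nu < y")
    case True
    then have "nu / y < 1" "nu/y > 0" using a by auto
    then have "(nu/y) powr b < 1" using a using powr_less_mono2[of b "nu/y" 1] by simp
    then show ?thesis using True by (simp add: pareto_cdf_def)
  qed (simp add: pareto_cdf_def)
qed

lemma h_rho:
  assumes "nu > 0" "b > 0" "rho > 1"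
  shows "rho powr (-b) * (1 - pareto_cdf nu b y) \<le> 1 - pareto_cdf nu b (rho * y)"
proof (cases "y > 0")
  case True
  define r where "r = rho powr b"
  define u where "u = (nu/y) powr b"
  have r1: "r > 1" unfolding r_def using assms by (simp add: ge_one_powr_ge_zero powr_less_mono2[of b 1 rho])
  have u0: "u \<ge> 0" unfolding u_def by simp
  have "1 - pareto_cdf nu b (rho * y) = min 1 ((nu / (rho * y)) powr b)"
    using h_alt[of nu "rho*y" b] assms True by (simp add: mult.commute)
  also have "(nu / (rho * y)) powr b = ((nu/y) / rho) powr b"
    by (simp add: mult.commute)
  also have "\<dots> = u / r"
    unfolding u_def r_def using assms True by (simp add: powr_divide powr_mult)
  finally have e1: "1 - pareto_cdf nu b (rho * y) = min 1 (u/r)" .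
  have e2: "1 - pareto_cdf nu b y = min 1 u" using h_alt[of nu y b] assms True u_def by simp
  have e3: "rho powr (-b) = 1/r" unfolding r_def by (simp add: powr_minus_divide)
  show ?thesis unfolding e1 e2 e3 using r1 u0
    by (auto simp: min_def field_simps)
next
  case False
  then have "rho * y \<le> 0" using assms by (simp add: mult_nonneg_nonpos)
  then have "rho * y \<le> nu" using assms by linarith
  then have "1 - pareto_cdf nu b (rho * y) = 1" by (simp add: pareto_cdf_def)
  moreover have "rho powr (-b) \<le> 1" using assms by (simp add: powr_le1 powr_minus_divide ge_one_powr_ge_zero)
  moreover have "0 \<le> 1 - pareto_cdf nu b y" "1 - pareto_cdf nu b y \<le> 1" using pareto_cdf_bounds[of b nu y] assms by auto
  ultimately show ?thesis by (metis mult_le_one order.trans order_refl powr_ge_zero)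
qed

lemma h_last:
  assumes "nu > 0" "b > 0" "rho > 1" "y > 0"
  shows "pareto_cdf nu b (rho * y) - pareto_cdf nu b (y / rho) \<le> (rho powr b - rho powr (-b)) * (1 - pareto_cdf nu b y)"
proof -
  define r where "r = rho powr b"
  define u where "u = (nu/y) powr b"
  have r1: "r > 1" unfolding r_def using assms by (simp add: ge_one_powr_ge_zero powr_less_mono2[of b 1 rho])
  have u0: "u \<ge> 0" unfolding u_def by simp
  have "1 - pareto_cdf nu b (rho * y) = min 1 ((nu / (rho * y)) powr b)"
    using h_alt[of nu "rho*y" b] assms by (simp add: mult.commute)
  also have "(nu / (rho * y)) powr b = ((nu/y) / rho) powr b"
    by (simp add: mult.commute)
  also have "\<dots> = u / r"
    unfolding u_def r_def using assms by (simp add: powr_divide powr_mult)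
  finally have e1: "1 - pareto_cdf nu b (rho * y) = min 1 (u/r)" .
  have "1 - pareto_cdf nu b (y / rho) = min 1 ((nu / (y / rho)) powr b)"
    using h_alt[of nu "y/rho" b] assms by simp
  also have "(nu / (y/rho)) powr b = u * r"
    unfolding u_def r_def using assms by (simp add: powr_mult[symmetric])
  finally have e4: "1 - pareto_cdf nu b (y/rho) = min 1 (u*r)" .
  have e2: "1 - pareto_cdf nu b y = min 1 u" using h_alt[of nu y b] assms u_def by simp
  have e3: "rho powr (-b) = 1/r" unfolding r_def by (simp add: powr_minus_divide)
  have "pareto_cdf nu b (rho * y) - pareto_cdf nu b (y / rho) = min 1 (u*r) - min 1 (u/r)"
    using e1 e4 by linarith
  also have "\<dots> \<le> (r - 1/r) * min 1 u"
  proof (cases "u \<ge> 1")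
    case True
    then have "u / r \<ge> 1/r" using r1 by (simp add: divide_right_mono)
    moreover have "1 \<le> u*r" using True r1 mult_mono[of 1 u 1 r] by simp
    ultimately have "min 1 (u*r) - min 1 (u/r) \<le> 1 - 1/r" using r1 True by (auto simp: min_def)
    also have "\<dots> \<le> r - 1/r" using r1 by simp
    finally show ?thesis using True by simp
  next
    case False
    then have "u/r < 1" using r1 u0 by (simp add: field_simps)
    then have "min 1 (u*r) - min 1 (u/r) \<le> u*r - u/r" by (auto simp: min_def)
    also have "\<dots> = (r - 1/r) * min 1 u" using False by (simp add: algebra_simps)
    finally show ?thesis .
  qed
  finally show ?thesis unfolding e2 e3 r_def .
qed

lemma h_level:
  assumes "nu > 0" "b > 0" "0 < t" "t \<le> 1"
  shows "(t \<le> 1 - pareto_cdf nu b y) \<longleftrightarrow> y \<le> nu / t powr (1/b)"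
proof (cases "y > 0")
  case True
  have tp: "t powr (1/b) > 0" using assms by simp
  have "(t \<le> 1 - pareto_cdf nu b y) \<longleftrightarrow> t \<le> (nu/y) powr b"
    using h_alt[of nu y b] assms True by auto
  also have "\<dots> \<longleftrightarrow> t powr (1/b) \<le> nu / y"
  proof
    assume "t \<le> (nu/y) powr b"
    then have "t powr (1/b) \<le> ((nu/y) powr b) powr (1/b)" using assms by (intro powr_mono2) auto
    also have "\<dots> = nu / y" using assms True by (simp add: powr_powr)
    finally show "t powr (1/b) \<le> nu / y" .
  next
    assume "t powr (1/b) \<le> nu / y"
    then have "(t powr (1/b)) powr b \<le> (nu/y) powr b" using assms by (intro powr_mono2) auto
    moreover have "(t powr (1/b)) powr b = t" using assms by (simp add: powr_powr)
    ultimately show "t \<le> (nu/y) powr b" by simp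
  qed
  also have "\<dots> \<longleftrightarrow> y \<le> nu / t powr (1/b)" using tp True by (simp add: field_simps)
  finally show ?thesis .
next
  case False
  have "t powr (1/b) > 0" using assms by simp
  then have "nu / t powr (1/b) > 0" using assms by simp
  moreover have "1 - pareto_cdf nu b y = 1" using False assms by (simp add: pareto_cdf_def)
  moreover have "y \<le> nu / t powr (1/b)" using False calculation(1) by linarith
  ultimately show ?thesis using assms by simp
qed

lemma cdf_level:
  assumes "nu > 0" "b > 0" "0 < t" "t \<le> 1"
  shows "pareto_cdf nu b (nu / t powr (1/b)) = 1 - t"
proof -
  have tp: "t powr (1/b) > 0" using assms by simp
  have "1 - pareto_cdf nu b (nu / t powr (1/b)) = min 1 ((nu / (nu / t powr (1/b))) powr b)"
    using h_alt[of nu "nu / t powr (1/b)" b] assms tp by simp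
  also have "(nu / (nu / t powr (1/b))) powr b = t" using assms tp by (simp add: powr_powr)
  finally show ?thesis using assms by simp
qed

lemma pair_Collect_sets:
  "{p \<in> space (borel \<Otimes>\<^sub>M borel). P p} \<in> sets (borel \<Otimes>\<^sub>M borel) \<Longrightarrow> {p::real\<times>real. P p} \<in> sets (borel \<Otimes>\<^sub>M borel)"
  by (simp add: space_pair_measure)

lemma borel_Collect_sets:
  "{p \<in> space borel. P p} \<in> sets borel \<Longrightarrow> {p::real. P p} \<in> sets borel"
  by simp

lemma ceil_pow:
  assumes "rho > 1" "m > 0"
  shows "m \<le> rho powr of_int \<lceil>log rho m\<rceil>" "rho powr of_int \<lceil>log rho m\<rceil> < rho * m"
        "m / rho \<le> rho powr (of_int \<lceil>log rho m\<rceil> - 1)"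
proof -
  have e: "rho powr (log rho m) = m" using assms by simp
  have "rho powr (log rho m) \<le> rho powr of_int \<lceil>log rho m\<rceil>"
    using assms by (intro powr_mono) auto
  then show "m \<le> rho powr of_int \<lceil>log rho m\<rceil>" using e by simp
  have "rho powr of_int \<lceil>log rho m\<rceil> < rho powr (log rho m + 1)"
    using assms by (intro powr_less_mono) linarith+
  also have "\<dots> = rho * m" using assms e by (simp add: powr_add)
  finally show "rho powr of_int \<lceil>log rho m\<rceil> < rho * m" .
  have "rho powr (log rho m - 1) \<le> rho powr (of_int \<lceil>log rho m\<rceil> - 1)"
    using assms by (intro powr_mono) auto
  moreover have "rho powr (log rho m - 1) = m / rho" using assms e by (simp add: powr_diff)
  ultimately show "m / rho \<le> rho powr (of_int \<lceil>log rho m\<rceil> - 1)" by simp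
qed

lemma (in prob_space) indep_vars_Max_swap:
  fixes X :: "'i \<Rightarrow> 'a \<Rightarrow> real"
  assumes I: "finite I" "i \<notin> I" and indep: "indep_vars (\<lambda>_. borel) X (insert i I)"
  shows "indep_var borel (\<lambda>\<omega>. Max ((\<lambda>i. X i \<omega>)`I)) borel (X i)"
proof -
  have "indep_var
    borel ((\<lambda>f. Max (f`I)) \<circ> (\<lambda>\<omega>. restrict (\<lambda>i. X i \<omega>) I))
    borel ((\<lambda>f. f i) \<circ> (\<lambda>\<omega>. restrict (\<lambda>i. X i \<omega>) {i}))"
    using I by (intro indep_var_compose[OF indep_var_restrict[OF indep]] borel_measurable_Max) auto
  also have "((\<lambda>f. f i) \<circ> (\<lambda>\<omega>. restrict (\<lambda>i. X i \<omega>) {i})) = X i"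
    by auto
  also have "((\<lambda>f. Max (f`I)) \<circ> (\<lambda>\<omega>. restrict (\<lambda>i. X i \<omega>) I)) = (\<lambda>\<omega>. Max ((\<lambda>i. X i \<omega>)`I))"
    by (auto cong: rev_conj_cong)
  finally show ?thesis .
qed

lemma (in prob_space) prob_Max_le:
  fixes X :: "'i \<Rightarrow> 'a \<Rightarrow> real"
  assumes I: "finite I" "I \<noteq> {}" "I \<subseteq> K" and indep: "indep_vars (\<lambda>_. borel) X K"
  shows "prob {\<omega>\<in>space M. Max ((\<lambda>i. X i \<omega>)`I) \<le> a} = (\<Prod>i\<in>I. prob {\<omega>\<in>space M. X i \<omega> \<le> a})"
proof -
  have "prob (\<Inter>i\<in>I. X i -` {..a} \<inter> space M) = (\<Prod>i\<in>I. prob (X i -` {..a} \<inter> space M))"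
    using I by (intro indep_varsD[OF indep]) auto
  moreover have "(\<Inter>i\<in>I. X i -` {..a} \<inter> space M) = {\<omega>\<in>space M. Max ((\<lambda>i. X i \<omega>)`I) \<le> a}"
    using I by auto
  moreover have "\<And>i. X i -` {..a} \<inter> space M = {\<omega>\<in>space M. X i \<omega> \<le> a}" by auto
  ultimately show ?thesis by simp
qed

theorem theorem5:
  fixes M :: "'a measure" and X :: "nat \<Rightarrow> 'a \<Rightarrow> real"
    and \<nu> \<beta> \<rho> :: real and n :: nat
  assumes "prob_space M"
    and "\<nu> > 0" and "\<beta> > 0" and "\<rho> > 1" and "n \<ge> 1"
    and "prob_space.indep_vars M (\<lambda>_. borel) X {0..n}"
    and "\<And>i x. i \<in> {0..n} \<Longrightarrow> measure M {\<omega> \<in> space M. X i \<omega> \<le> x} = pareto_cdf \<nu> \<beta> x"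
  defines "J \<equiv> \<lambda>\<omega>. log \<rho> (Max ((\<lambda>i. X i \<omega>) ` {1..n}))"
  defines "p_last \<equiv> measure M {\<omega> \<in> space M.
              \<rho> powr (real_of_int \<lceil>J \<omega>\<rceil> - 1) < X 0 \<omega> \<and> X 0 \<omega> \<le> \<rho> powr real_of_int \<lceil>J \<omega>\<rceil>}"
  defines "p_tail \<equiv> measure M {\<omega> \<in> space M. X 0 \<omega> > \<rho> powr real_of_int \<lceil>J \<omega>\<rceil>}"
  shows "p_last \<le> (\<rho> powr \<beta> - \<rho> powr (-\<beta>)) / (n + 1)
         \<and> \<rho> powr (-\<beta>) / (n + 1) \<le> p_tail \<and> p_tail \<le> 1 / (n + 1)"
proof -
  interpret P: prob_space M by fact
  define F where "F = pareto_cdf \<nu> \<beta>"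
  define h where "h = (\<lambda>y. 1 - F y)"
  define Mx where "Mx = (\<lambda>\<omega>. Max ((\<lambda>i. X i \<omega>) ` {1..n}))"
  note ind = assms(6)
  have rv: "\<And>i. i \<in> {0..n} \<Longrightarrow> X i \<in> borel_measurable M"
    using ind unfolding P.indep_vars_def by auto
  have X0[measurable]: "X 0 \<in> borel_measurable M" using rv by auto
  have Mxm[measurable]: "Mx \<in> borel_measurable M"
    unfolding Mx_def by (rule borel_measurable_Max) (use rv in auto)
  have Fm[measurable]: "F \<in> borel_measurable borel" unfolding F_def by simp
  have hm[measurable]: "h \<in> borel_measurable borel" unfolding h_def by simp
  have Fb: "\<And>y. 0 \<le> F y \<and> F y \<le> 1" unfolding F_def using pareto_cdf_bounds assms(2,3) by auto
  have cdf: "\<And>i x. i \<in> {0..n} \<Longrightarrow> P.prob {\<omega>\<in>space M. X i \<omega> \<le> x} = F x"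
    using assms(7) F_def by simp
  have tail: "P.prob {\<omega>\<in>space M. x < X i \<omega>} = h x" if i: "i \<in> {0..n}" for i x
  proof -
    have [measurable]: "X i \<in> borel_measurable M" using rv i by auto
    have "{\<omega>\<in>space M. x < X i \<omega>} = space M - {\<omega>\<in>space M. X i \<omega> \<le> x}" by auto
    moreover have "{\<omega>\<in>space M. X i \<omega> \<le> x} \<in> sets M" by measurable
    ultimately show ?thesis using P.prob_compl[of "{\<omega>\<in>space M. X i \<omega> \<le> x}"] cdf[OF i] h_def by simp
  qed
  have probMx: "P.prob {\<omega>\<in>space M. Mx \<omega> \<le> a} = F a ^ n" for a
  proof -
    have "P.prob {\<omega>\<in>space M. Mx \<omega> \<le> a} = (\<Prod>i\<in>{1..n}. P.prob {\<omega>\<in>space M. X i \<omega> \<le> a})"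
      unfolding Mx_def using assms(5) by (intro P.prob_Max_le[OF _ _ _ ind]) auto
    also have "\<dots> = (\<Prod>i\<in>{1..n}. F a)" by (intro prod.cong refl cdf) auto
    finally show ?thesis by simp
  qed
  have null: "P.prob {\<omega>\<in>space M. Mx \<omega> \<le> \<nu>} = 0"
    using probMx[of \<nu>] assms(5) by (simp add: F_def pareto_cdf_def)
  have key: "(\<integral>\<^sup>+\<omega>. ennreal (h (Mx \<omega>)) \<partial>M) = ennreal (1 / (n + 1))"
  proof -
    define f where "f = (\<lambda>\<omega> t. if 0 \<le> t \<and> t \<le> h (Mx \<omega>) then 1 else (0::ennreal))"
    have fm: "case_prod f \<in> borel_measurable (M \<Otimes>\<^sub>M lborel)"
      unfolding f_def by measurable
    interpret PS: pair_sigma_finite M lborel ..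
    have hnn': "\<And>y. 0 \<le> h y" unfolding h_def using Fb by (simp add: algebra_simps)
    have hle1: "\<And>y. h y \<le> 1" unfolding h_def using Fb by (simp add: algebra_simps)
    have a: "(\<integral>\<^sup>+t. f \<omega> t \<partial>lborel) = ennreal (h (Mx \<omega>))" for \<omega>
    proof -
      have "(\<lambda>t. f \<omega> t) = indicator {0..h (Mx \<omega>)}"
        by (auto simp: f_def indicator_def fun_eq_iff)
      then have "(\<integral>\<^sup>+t. f \<omega> t \<partial>lborel) = emeasure lborel {0..h (Mx \<omega>)}" by simp
      then show ?thesis using hnn'[of "Mx \<omega>"] by simp
    qed
    have c: "(\<integral>\<^sup>+\<omega>. f \<omega> t \<partial>M) = ennreal ((1 - t) ^ n) * indicator {0..1} t" for t
    proof -
      have [measurable]: "{\<omega>\<in>space M. 0 \<le> t \<and> t \<le> h (Mx \<omega>)} \<in> sets M" by measurable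
      have "(\<integral>\<^sup>+\<omega>. f \<omega> t \<partial>M) = (\<integral>\<^sup>+\<omega>. indicator {\<omega>\<in>space M. 0 \<le> t \<and> t \<le> h (Mx \<omega>)} \<omega> \<partial>M)"
        by (intro nn_integral_cong) (auto simp: f_def indicator_def)
      also have "\<dots> = emeasure M {\<omega>\<in>space M. 0 \<le> t \<and> t \<le> h (Mx \<omega>)}" by simp
      also have "\<dots> = ennreal ((1 - t) ^ n) * indicator {0..1} t"
      proof (cases "t < 0 \<or> t > 1")
        case True
        then have E: "{\<omega>\<in>space M. 0 \<le> t \<and> t \<le> h (Mx \<omega>)} = {}" using hle1 by (auto simp: not_le) (meson le_less_trans not_less)
        show ?thesis unfolding E using True by auto
      next
        case False
        show ?thesis
        proof (cases "t = 0")
          case True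
          then have "{\<omega>\<in>space M. 0 \<le> t \<and> t \<le> h (Mx \<omega>)} = space M" using hnn' by auto
          then show ?thesis using True P.emeasure_space_1 by simp
        next
          case t0: False
          then have t01: "0 < t" "t \<le> 1" using False by auto
          have "{\<omega>\<in>space M. 0 \<le> t \<and> t \<le> h (Mx \<omega>)} = {\<omega>\<in>space M. Mx \<omega> \<le> \<nu> / t powr (1/\<beta>)}"
            using h_level[OF assms(2,3) t01] t01 unfolding h_def F_def by auto
          moreover have "emeasure M {\<omega>\<in>space M. Mx \<omega> \<le> \<nu> / t powr (1/\<beta>)} = ennreal ((1 - t) ^ n)"
            using probMx cdf_level[OF assms(2,3) t01] unfolding F_def by (simp add: P.emeasure_eq_measure)
          ultimately show ?thesis using t01 by simp
        qed
      qed
      finally show ?thesis .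
    qed
    have d: "(\<integral>\<^sup>+t. ennreal ((1 - t) ^ n) * indicator {0..1} t \<partial>lborel) = ennreal (1 / (n + 1))"
    proof -
      have "(\<integral>\<^sup>+t. ennreal ((1 - t) ^ n) * indicator {0..1} t \<partial>lborel)
          = ennreal ((\<lambda>t. - ((1 - t) ^ Suc n / real (Suc n))) 1 - (\<lambda>t. - ((1 - t) ^ Suc n / real (Suc n))) 0)"
      proof (rule nn_integral_FTC_Icc)
        fix x :: real
        show "((\<lambda>t. - ((1 - t) ^ Suc n / real (Suc n))) has_real_derivative (1 - x) ^ n) (at x)"
        proof -
          have e: "real n * (1 - x) ^ (n - Suc 0) * (1 - x) = real n * (1 - x) ^ n" by (cases n) auto
          show ?thesis
            by (auto intro!: derivative_eq_intros simp del: of_nat_Suc, subst e, simp add: field_simps)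
        qed
      next
        fix x :: real assume "x \<in> {0..1}"
        then show "0 \<le> (1 - x) ^ n" by simp
      qed auto
      then show ?thesis by simp
    qed
    have "(\<integral>\<^sup>+\<omega>. ennreal (h (Mx \<omega>)) \<partial>M) = (\<integral>\<^sup>+\<omega>. (\<integral>\<^sup>+t. f \<omega> t \<partial>lborel) \<partial>M)"
      using a by simp
    also have "\<dots> = (\<integral>\<^sup>+t. (\<integral>\<^sup>+\<omega>. f \<omega> t \<partial>M) \<partial>lborel)"
      using PS.Fubini'[OF fm] by simp
    also have "\<dots> = (\<integral>\<^sup>+t. ennreal ((1 - t) ^ n) * indicator {0..1} t \<partial>lborel)"
      using c by simp
    finally show ?thesis using d by simp
  qed
  have mu0: "emeasure (distr M borel (X 0)) B = emeasure M {\<omega>\<in>space M. X 0 \<omega> \<in> B}"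
    if "B \<in> sets borel" for B
    using that by (subst emeasure_distr) (auto intro!: arg_cong[where f="emeasure M"])
  have pairf: "emeasure M {\<omega>\<in>space M. (Mx \<omega>, X 0 \<omega>) \<in> A}
      = (\<integral>\<^sup>+\<omega>. emeasure (distr M borel (X 0)) (Pair (Mx \<omega>) -` A) \<partial>M)"
    if A: "A \<in> sets (borel \<Otimes>\<^sub>M borel)" for A
  proof -
    have "insert 0 {1..n} = {0..n}" by auto
    then have iv: "P.indep_var borel Mx borel (X 0)"
      unfolding Mx_def using P.indep_vars_Max_swap[of "{1..n}" 0 X] ind by simp
    then have deq: "distr M borel Mx \<Otimes>\<^sub>M distr M borel (X 0) = distr M (borel \<Otimes>\<^sub>M borel) (\<lambda>x. (Mx x, X 0 x))"
      using P.indep_var_distribution_eq by blast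
    interpret mu0: prob_space "distr M borel (X 0)" by (rule P.prob_space_distr) simp
    have "emeasure M {\<omega>\<in>space M. (Mx \<omega>, X 0 \<omega>) \<in> A} = emeasure (distr M (borel \<Otimes>\<^sub>M borel) (\<lambda>x. (Mx x, X 0 x))) A"
      using A by (subst emeasure_distr) (auto intro!: arg_cong[where f="emeasure M"])
    also have "\<dots> = emeasure (distr M borel Mx \<Otimes>\<^sub>M distr M borel (X 0)) A" unfolding deq ..
    also have "\<dots> = (\<integral>\<^sup>+y. emeasure (distr M borel (X 0)) (Pair y -` A) \<partial>distr M borel Mx)"
      using A by (intro mu0.emeasure_pair_measure_alt) simp
    also have "\<dots> = (\<integral>\<^sup>+\<omega>. emeasure (distr M borel (X 0)) (Pair (Mx \<omega>) -` A) \<partial>M)"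
      using A by (intro nn_integral_distr) (auto intro!: mu0.measurable_emeasure_Pair)
    finally show ?thesis .
  qed
  have hnn: "\<And>y. 0 \<le> h y" unfolding h_def using Fb by (simp add: algebra_simps)
  have em0: "emeasure (distr M borel (X 0)) {x. c < x} = ennreal (h c)" for c
  proof -
    have "emeasure (distr M borel (X 0)) {x. c < x} = emeasure M {\<omega>\<in>space M. X 0 \<omega> \<in> {x. c < x}}"
      by (rule mu0, rule borel_Collect_sets) measurable
    also have "\<dots> = ennreal (P.prob {\<omega>\<in>space M. c < X 0 \<omega>})" by (simp add: P.emeasure_eq_measure)
    also have "\<dots> = ennreal (h c)" using tail[of 0 c] by simp
    finally show ?thesis .
  qed
  have T1: "P.prob {\<omega>\<in>space M. Mx \<omega> < X 0 \<omega>} = 1 / (n + 1)"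
  proof -
    have "emeasure M {\<omega>\<in>space M. (Mx \<omega>, X 0 \<omega>) \<in> {p. fst p < snd p}}
       = (\<integral>\<^sup>+\<omega>. emeasure (distr M borel (X 0)) (Pair (Mx \<omega>) -` {p. fst p < snd p}) \<partial>M)"
      by (rule pairf, rule pair_Collect_sets) measurable
    also have "\<dots> = (\<integral>\<^sup>+\<omega>. ennreal (h (Mx \<omega>)) \<partial>M)"
      using em0 by (simp add: vimage_def)
    finally have "ennreal (P.prob {\<omega>\<in>space M. Mx \<omega> < X 0 \<omega>}) = ennreal (1 / (n + 1))"
      using key by (simp add: P.emeasure_eq_measure)
    then show ?thesis by (simp add: ennreal_inj)
  qed
  have T2: "\<rho> powr (-\<beta>) / (n + 1) \<le> P.prob {\<omega>\<in>space M. \<rho> * Mx \<omega> < X 0 \<omega>}"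
  proof -
    have "emeasure M {\<omega>\<in>space M. (Mx \<omega>, X 0 \<omega>) \<in> {p. \<rho> * fst p < snd p}}
       = (\<integral>\<^sup>+\<omega>. emeasure (distr M borel (X 0)) (Pair (Mx \<omega>) -` {p. \<rho> * fst p < snd p}) \<partial>M)"
      by (rule pairf, rule pair_Collect_sets) measurable
    also have "\<dots> = (\<integral>\<^sup>+\<omega>. ennreal (h (\<rho> * Mx \<omega>)) \<partial>M)"
      using em0 by (simp add: vimage_def)
    also have "\<dots> \<ge> (\<integral>\<^sup>+\<omega>. ennreal (\<rho> powr (-\<beta>)) * ennreal (h (Mx \<omega>)) \<partial>M)"
    proof (intro nn_integral_mono)
      fix \<omega>
      have "\<rho> powr (-\<beta>) * h (Mx \<omega>) \<le> h (\<rho> * Mx \<omega>)"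
        unfolding h_def F_def using h_rho assms(2,3,4) by blast
      then show "ennreal (\<rho> powr (-\<beta>)) * ennreal (h (Mx \<omega>)) \<le> ennreal (h (\<rho> * Mx \<omega>))"
        using hnn by (subst ennreal_mult[symmetric]) (auto intro: ennreal_leI)
    qed
    also have "(\<integral>\<^sup>+\<omega>. ennreal (\<rho> powr (-\<beta>)) * ennreal (h (Mx \<omega>)) \<partial>M) = ennreal (\<rho> powr (-\<beta>)) * ennreal (1 / (n + 1))"
      using key by (subst nn_integral_cmult) auto
    also have "\<dots> = ennreal (\<rho> powr (-\<beta>) / (n + 1))" by (simp add: ennreal_mult[symmetric])
    finally have "ennreal (\<rho> powr (-\<beta>) / (n + 1)) \<le> ennreal (P.prob {\<omega>\<in>space M. \<rho> * Mx \<omega> < X 0 \<omega>})"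
      by (simp add: P.emeasure_eq_measure)
    then show ?thesis by (subst (asm) ennreal_le_iff) (auto simp: measure_nonneg)
  qed
  have T3: "P.prob {\<omega>\<in>space M. Mx \<omega> / \<rho> < X 0 \<omega> \<and> X 0 \<omega> \<le> \<rho> * Mx \<omega>}
      \<le> (\<rho> powr \<beta> - \<rho> powr (-\<beta>)) / (n + 1)"
  proof -
    define c where "c = \<rho> powr \<beta> - \<rho> powr (-\<beta>)"
    have c0: "c \<ge> 0" unfolding c_def using assms(3,4) by (simp add: powr_mono)
    have sec: "emeasure (distr M borel (X 0)) {x. y / \<rho> < x \<and> x \<le> \<rho> * y} \<le> ennreal (c * h y)" for y
    proof (cases "y > 0")
      case False
      have "\<rho> * y \<le> y / \<rho>"
      proof -
        have r2: "1 \<le> \<rho> * \<rho>" using assms(4) mult_mono[of 1 \<rho> 1 \<rho>] by simp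
        have "(\<rho> * \<rho> - 1) * y \<le> 0" using r2 False by (intro mult_nonneg_nonpos) auto
        then have "\<rho> * \<rho> * y \<le> y" by (simp add: algebra_simps)
        then show ?thesis using assms(4) by (simp add: field_simps)
      qed
      then have "{x. y / \<rho> < x \<and> x \<le> \<rho> * y} = {}" by auto
      then show ?thesis by (metis emeasure_empty zero_le)
    next
      case True
      have [measurable]: "{x::real. y / \<rho> < x \<and> x \<le> \<rho> * y} \<in> sets borel" by (rule borel_Collect_sets) measurable
      have "emeasure (distr M borel (X 0)) {x. y / \<rho> < x \<and> x \<le> \<rho> * y}
         = emeasure M {\<omega>\<in>space M. X 0 \<omega> \<in> {x. y / \<rho> < x \<and> x \<le> \<rho> * y}}"
        by (rule mu0, rule borel_Collect_sets) measurable
      also have "{\<omega>\<in>space M. X 0 \<omega> \<in> {x. y / \<rho> < x \<and> x \<le> \<rho> * y}}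
          = {\<omega>\<in>space M. X 0 \<omega> \<le> \<rho> * y} - {\<omega>\<in>space M. X 0 \<omega> \<le> y / \<rho>}" by auto
      also have "emeasure M \<dots> = ennreal (P.prob {\<omega>\<in>space M. X 0 \<omega> \<le> \<rho> * y} - P.prob {\<omega>\<in>space M. X 0 \<omega> \<le> y / \<rho>})"
      proof -
        have "y / \<rho> \<le> \<rho> * y" using True assms(4)
          using True assms(4) by (smt (verit) divide_le_eq mult_le_cancel_right1 mult.commute)
        then have sub: "{\<omega>\<in>space M. X 0 \<omega> \<le> y / \<rho>} \<subseteq> {\<omega>\<in>space M. X 0 \<omega> \<le> \<rho> * y}" by auto
        show ?thesis
        proof -
          have s1: "{\<omega>\<in>space M. X 0 \<omega> \<le> \<rho> * y} \<in> sets M" by measurable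
          have s2: "{\<omega>\<in>space M. X 0 \<omega> \<le> y / \<rho>} \<in> sets M" by measurable
          show ?thesis using P.finite_measure_Diff[OF s1 s2 sub] by (simp add: P.emeasure_eq_measure)
        qed
      qed
      also have "\<dots> = ennreal (F (\<rho> * y) - F (y / \<rho>))" using cdf[of 0] by simp
      also have "\<dots> \<le> ennreal (c * h y)"
        using h_last[OF assms(2,3,4) True] unfolding c_def h_def F_def by (intro ennreal_leI)
      finally show ?thesis .
    qed
    have "emeasure M {\<omega>\<in>space M. (Mx \<omega>, X 0 \<omega>) \<in> {p. fst p / \<rho> < snd p \<and> snd p \<le> \<rho> * fst p}}
       = (\<integral>\<^sup>+\<omega>. emeasure (distr M borel (X 0)) (Pair (Mx \<omega>) -` {p. fst p / \<rho> < snd p \<and> snd p \<le> \<rho> * fst p}) \<partial>M)"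
      by (rule pairf, rule pair_Collect_sets) measurable
    also have "\<dots> \<le> (\<integral>\<^sup>+\<omega>. ennreal c * ennreal (h (Mx \<omega>)) \<partial>M)"
      using sec c0 hnn by (intro nn_integral_mono) (simp add: vimage_def ennreal_mult[symmetric])
    also have "\<dots> = ennreal c * ennreal (1 / (n + 1))"
      using key by (subst nn_integral_cmult) auto
    also have "\<dots> = ennreal (c / (n + 1))" using c0 by (simp add: ennreal_mult[symmetric])
    finally have "ennreal (P.prob {\<omega>\<in>space M. Mx \<omega> / \<rho> < X 0 \<omega> \<and> X 0 \<omega> \<le> \<rho> * Mx \<omega>}) \<le> ennreal (c / (n + 1))"
      by (simp add: P.emeasure_eq_measure)
    then show ?thesis unfolding c_def using c0 c_def by (simp add: ennreal_le_iff)
  qed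
  define N where "N = {\<omega>\<in>space M. Mx \<omega> \<le> \<nu>}"
  have Nm: "N \<in> sets M" unfolding N_def by measurable
  have Jeq: "J = (\<lambda>\<omega>. log \<rho> (Mx \<omega>))" unfolding J_def Mx_def ..
  have good: "\<And>\<omega>. \<omega> \<notin> N \<Longrightarrow> \<omega> \<in> space M \<Longrightarrow> Mx \<omega> > 0"
    unfolding N_def using assms(2) by auto
  note cp = ceil_pow[OF assms(4)]
  have S1: "{\<omega> \<in> space M. X 0 \<omega> > \<rho> powr real_of_int \<lceil>J \<omega>\<rceil>} \<subseteq> {\<omega>\<in>space M. Mx \<omega> < X 0 \<omega>} \<union> N"
    using good cp(1) unfolding Jeq by (auto intro: le_less_trans)
  have S2: "{\<omega>\<in>space M. \<rho> * Mx \<omega> < X 0 \<omega>} \<subseteq> {\<omega> \<in> space M. X 0 \<omega> > \<rho> powr real_of_int \<lceil>J \<omega>\<rceil>} \<union> N"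
    using good cp(2) unfolding Jeq by (auto intro: less_trans)
  have S3: "{\<omega> \<in> space M. \<rho> powr (real_of_int \<lceil>J \<omega>\<rceil> - 1) < X 0 \<omega> \<and> X 0 \<omega> \<le> \<rho> powr real_of_int \<lceil>J \<omega>\<rceil>}
     \<subseteq> {\<omega>\<in>space M. Mx \<omega> / \<rho> < X 0 \<omega> \<and> X 0 \<omega> \<le> \<rho> * Mx \<omega>} \<union> N"
  proof
    fix \<omega> assume w: "\<omega> \<in> {\<omega> \<in> space M. \<rho> powr (real_of_int \<lceil>J \<omega>\<rceil> - 1) < X 0 \<omega> \<and> X 0 \<omega> \<le> \<rho> powr real_of_int \<lceil>J \<omega>\<rceil>}"
    show "\<omega> \<in> {\<omega>\<in>space M. Mx \<omega> / \<rho> < X 0 \<omega> \<and> X 0 \<omega> \<le> \<rho> * Mx \<omega>} \<union> N"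
    proof (cases "\<omega> \<in> N")
      case False
      then have m: "Mx \<omega> > 0" using good w by auto
      have a: "Mx \<omega> / \<rho> \<le> \<rho> powr (real_of_int \<lceil>J \<omega>\<rceil> - 1)" using cp(3)[OF m] unfolding Jeq by simp
      have b: "\<rho> powr real_of_int \<lceil>J \<omega>\<rceil> < \<rho> * Mx \<omega>" using cp(2)[OF m] unfolding Jeq by simp
      show ?thesis using w a b by auto
    qed simp
  qed
  have Stm: "{\<omega> \<in> space M. X 0 \<omega> > \<rho> powr real_of_int \<lceil>J \<omega>\<rceil>} \<in> sets M"
    unfolding Jeq by measurable
  have "p_tail \<le> P.prob ({\<omega>\<in>space M. Mx \<omega> < X 0 \<omega>} \<union> N)"
    unfolding p_tail_def by (rule P.finite_measure_mono[OF S1]) (use Nm in measurable)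
  also have "\<dots> \<le> P.prob {\<omega>\<in>space M. Mx \<omega> < X 0 \<omega>} + P.prob N"
    by (rule measure_Un_le) (use Nm in measurable)
  finally have R1: "p_tail \<le> 1 / (n + 1)" using T1 null N_def by simp
  have "P.prob {\<omega>\<in>space M. \<rho> * Mx \<omega> < X 0 \<omega>} \<le> P.prob ({\<omega> \<in> space M. X 0 \<omega> > \<rho> powr real_of_int \<lceil>J \<omega>\<rceil>} \<union> N)"
    by (rule P.finite_measure_mono[OF S2]) (use Nm Stm in measurable)
  also have "\<dots> \<le> p_tail + P.prob N"
    unfolding p_tail_def by (rule measure_Un_le) (use Nm Stm in auto)
  finally have R2: "\<rho> powr (-\<beta>) / (n + 1) \<le> p_tail" using T2 null N_def by simp
  have "p_last \<le> P.prob ({\<omega>\<in>space M. Mx \<omega> / \<rho> < X 0 \<omega> \<and> X 0 \<omega> \<le> \<rho> * Mx \<omega>} \<union> N)"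
    unfolding p_last_def by (rule P.finite_measure_mono[OF S3]) (use Nm in measurable)
  also have "\<dots> \<le> P.prob {\<omega>\<in>space M. Mx \<omega> / \<rho> < X 0 \<omega> \<and> X 0 \<omega> \<le> \<rho> * Mx \<omega>} + P.prob N"
    by (rule measure_Un_le) (use Nm in measurable)
  finally have R3: "p_last \<le> (\<rho> powr \<beta> - \<rho> powr (-\<beta>)) / (n + 1)" using T3 null N_def by simp
  show ?thesis using R1 R2 R3 by simp
qed
end
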